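(* Let $\mathbf{T}\in\{0,1\}^{n\times\ell}$ be a matrix consisting of $\ell\ge 14$ dirty columns with $\delta(\mathbf{T})=3$. Then there is a permutation of the rows of $\mathbf{T}$ such that the resulting matrix $\mathbf{T}'$ satisfies $|\mathcal{T}'_3|\ge 5$.
   Context: A column of a binary matrix is dirty if it contains both $0$ and $1$. For rows $u,w\in\{0,1\}^\ell$, $D(u,w)=\{j:u[j]\ne w[j]\}$ and $d(u,w)=|D(u,w)|$; $\delta(\mathbf{T})=\max_{i\ne i'}d(\mathbf{T}[i],\mathbf{T}[i'])$. For a matrix $\mathbf{T}'$ with $n$ rows $\mathbf{T}'[1],\dots,\mathbf{T}'[n]$, $\mathcal{T}'_3$ is the set system (without duplicates) $\{D(\mathbf{T}'[i],\mathbf{T}'[n]): i\in[n-1],\ d(\mathbf{T}'[i],\mathbf{T}'[n])=3\}$. *)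

theory Defs
  imports "HOL-Combinatorics.Permutations"
begin

text \<open>A binary n x l matrix is a function T :: nat => nat => bool; rows are
  indexed by {0..<n} (row n-1 is the last row), columns by {0..<l}.\<close>

definition Dset :: "(nat \<Rightarrow> nat \<Rightarrow> bool) \<Rightarrow> nat \<Rightarrow> nat \<Rightarrow> nat \<Rightarrow> nat set" where
  "Dset T l i i' = {j \<in> {0..<l}. T i j \<noteq> T i' j}"

definition dist_rows :: "(nat \<Rightarrow> nat \<Rightarrow> bool) \<Rightarrow> nat \<Rightarrow> nat \<Rightarrow> nat \<Rightarrow> nat" where
  "dist_rows T l i i' = card (Dset T l i i')"

definition dirty_col :: "(nat \<Rightarrow> nat \<Rightarrow> bool) \<Rightarrow> nat \<Rightarrow> nat \<Rightarrow> bool" where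
  "dirty_col T n j \<longleftrightarrow> (\<exists>i<n. \<exists>i'<n. T i j \<noteq> T i' j)"

definition delta :: "(nat \<Rightarrow> nat \<Rightarrow> bool) \<Rightarrow> nat \<Rightarrow> nat \<Rightarrow> nat" where
  "delta T n l = Max {dist_rows T l i i' | i i'. i < n \<and> i' < n \<and> i \<noteq> i'}"

definition T3 :: "(nat \<Rightarrow> nat \<Rightarrow> bool) \<Rightarrow> nat \<Rightarrow> nat \<Rightarrow> nat set set" where
  "T3 T n l = {Dset T l i (n - 1) | i. i < n - 1 \<and> dist_rows T l i (n - 1) = 3}"

end

theory Submission
  imports Defs
begin

lemma comb_step:
  fixes A P :: "nat set"
  assumes fA: "finite A" and fP: "finite P" and cP: "card P = 3"
    and cA: "card A \<le> 3" and cB: "card ((A - P) \<union> (P - A)) \<le> 3"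
    and j: "j \<in> A - P"
  shows "A - P = {j} \<and> (card A = 3 \<or> card ((A - P) \<union> (P - A)) = 3)"
proof -
  have e1: "card A = card (A - P) + card (A \<inter> P)"
    using fA by (metis Int_Diff_disjoint Un_Diff_Int card_Un_disjoint finite_Diff finite_Int inf_commute)
  have e2: "card ((A - P) \<union> (P - A)) = card (A - P) + card (P - A)"
    using fA fP by (intro card_Un_disjoint) auto
  have e3: "card P = card (P - A) + card (A \<inter> P)"
    using fP by (metis Int_Diff_disjoint Un_Diff_Int card_Un_disjoint finite_Diff finite_Int inf_commute)
  have pos: "card (A - P) \<ge> 1" using j fA
    by (metis One_nat_def Suc_leI card_gt_0_iff empty_iff finite_Diff)
  have c1: "card (A - P) = 1" using e1 e2 e3 cP cA cB pos by linarith
  have "A - P = {j}" using c1 j by (metis card_1_singletonE singletonD)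
  moreover have "card A = 3 \<or> card ((A - P) \<union> (P - A)) = 3"
    using e1 e2 e3 cP cA cB c1 by linarith
  ultimately show ?thesis by blast
qed

lemma final_step:
  fixes T :: "nat \<Rightarrow> nat \<Rightarrow> bool" and n l u :: nat
  assumes u: "u < n"
    and G: "\<forall>x\<in>G. x < n \<and> x \<noteq> u \<and> dist_rows T l x u = 3"
    and c: "card ((\<lambda>x. Dset T l x u) ` G) \<ge> 5"
  shows "\<exists>\<sigma>. \<sigma> permutes {0..<n} \<and> card (T3 (\<lambda>i. T (\<sigma> i)) n l) \<ge> 5"
proof -
  define \<sigma> where "\<sigma> = Transposition.transpose u (n - 1)"
  have p: "\<sigma> permutes {0..<n}" unfolding \<sigma>_def using u by (intro permutes_swap_id) auto
  have sub: "(\<lambda>x. Dset T l x u) ` G \<subseteq> T3 (\<lambda>i. T (\<sigma> i)) n l"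
  proof
    fix D assume "D \<in> (\<lambda>x. Dset T l x u) ` G"
    then obtain x where x: "x \<in> G" "D = Dset T l x u" by blast
    have xn: "x < n" "x \<noteq> u" "dist_rows T l x u = 3" using G x by auto
    have s1: "\<sigma> (n - 1) = u" unfolding \<sigma>_def by simp
    have s2: "\<sigma> (\<sigma> x) = x" unfolding \<sigma>_def by simp
    have s3: "\<sigma> x \<noteq> n - 1" using s1 s2 xn(2) by metis
    have s4: "\<sigma> x < n" using p xn(1) by (metis atLeastLessThan_iff permutes_in_image zero_le)
    have dd: "Dset (\<lambda>i. T (\<sigma> i)) l (\<sigma> x) (n - 1) = Dset T l x u"
      unfolding Dset_def using s1 s2 by simp
    show "D \<in> T3 (\<lambda>i. T (\<sigma> i)) n l"
      unfolding T3_def using s3 s4 dd x(2) xn(3) unfolding dist_rows_def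
      by (intro CollectI exI[of _ "\<sigma> x"]) auto
  qed
  have fin: "finite (T3 (\<lambda>i. T (\<sigma> i)) n l)"
  proof (rule finite_subset)
    show "T3 (\<lambda>i. T (\<sigma> i)) n l \<subseteq> Pow {0..<l}" unfolding T3_def Dset_def by auto
  qed auto
  have "card ((\<lambda>x. Dset T l x u) ` G) \<le> card (T3 (\<lambda>i. T (\<sigma> i)) n l)"
    using card_mono[OF fin sub] .
  then show ?thesis using p c by (intro exI[of _ \<sigma>]) auto
qed

theorem lemma15:
  fixes T :: "nat \<Rightarrow> nat \<Rightarrow> bool" and n l :: nat
  assumes "l \<ge> 14"
    and "\<forall>j<l. dirty_col T n j"
    and "delta T n l = 3"
  shows "\<exists>\<sigma>. \<sigma> permutes {0..<n} \<and> card (T3 (\<lambda>i. T (\<sigma> i)) n l) \<ge> 5"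
proof -
  define S where "S = {dist_rows T l i i' | i i'. i < n \<and> i' < n \<and> i \<noteq> i'}"
  have "dirty_col T n 0" using assms(1,2) by auto
  then obtain i0 i1 where "i0 < n" "i1 < n" "T i0 0 \<noteq> T i1 0" unfolding dirty_col_def by blast
  then have "i0 \<noteq> i1" by blast
  then have n2: "n \<ge> 2" using \<open>i0 < n\<close> \<open>i1 < n\<close> by linarith
  have finS: "finite S"
  proof -
    have "S \<subseteq> (\<lambda>(i, i'). dist_rows T l i i') ` ({0..<n} \<times> {0..<n})"
      unfolding S_def by auto
    then show ?thesis by (rule finite_subset) auto
  qed
  have "dist_rows T l 0 1 \<in> S" unfolding S_def using n2 by force
  then have neS: "S \<noteq> {}" by blast
  have maxS: "Max S = 3" using assms(3) unfolding delta_def S_def by simp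
  have bound: "dist_rows T l i i' \<le> 3" if "i < n" "i' < n" "i \<noteq> i'" for i i'
  proof -
    have "dist_rows T l i i' \<in> S" unfolding S_def using that by blast
    then show ?thesis using Max_ge[OF finS] maxS by metis
  qed
  have "3 \<in> S" using Max_in[OF finS neS] maxS by simp
  then obtain v w where vw: "v < n" "w < n" "v \<noteq> w" "dist_rows T l v w = 3"
    unfolding S_def by auto
  define P where "P = Dset T l v w"
  have cP: "card P = 3" using vw(4) unfolding P_def dist_rows_def .
  have PL: "P \<subseteq> {0..<l}" unfolding P_def Dset_def by auto
  have finP: "finite P" using PL finite_subset by blast
  define J where "J = {0..<l} - P"
  have cJ: "card J \<ge> 11"
  proof -
    have "card J = l - 3" unfolding J_def using card_Diff_subset[OF finP PL] cP by simp
    then show ?thesis using assms(1) by simp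
  qed
  have finJ: "finite J" unfolding J_def by simp
  have ex: "\<forall>j\<in>J. \<exists>x. x < n \<and> T x j \<noteq> T v j"
  proof
    fix j assume "j \<in> J"
    then have "j < l" unfolding J_def by auto
    then have "dirty_col T n j" using assms(2) by auto
    then obtain a b where "a < n" "b < n" "T a j \<noteq> T b j" unfolding dirty_col_def by blast
    then show "\<exists>x. x < n \<and> T x j \<noteq> T v j"
      by (cases "T a j = T v j") blast+
  qed
  then obtain f where f: "\<forall>j\<in>J. f j < n \<and> T (f j) j \<noteq> T v j" by (rule bchoice[elim_format]) blast
  have symd: "Dset T l x w = (Dset T l x v - P) \<union> (P - Dset T l x v)" for x
    unfolding P_def Dset_def by auto
  have keyj: "Dset T l (f j) v - P = {j} \<and>
      (dist_rows T l (f j) v = 3 \<or> dist_rows T l (f j) w = 3)" if jJ: "j \<in> J" for j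
  proof -
    define A where "A = Dset T l (f j) v"
    have fA: "finite A" unfolding A_def Dset_def by simp
    have fj: "f j < n" "T (f j) j \<noteq> T v j" using f jJ by auto
    have jA: "j \<in> A - P" using jJ fj(2) unfolding A_def Dset_def J_def by auto
    have cA: "card A \<le> 3"
    proof (cases "f j = v")
      case True then show ?thesis using fj by simp
    next
      case False then show ?thesis using bound[OF fj(1) vw(1)] unfolding A_def dist_rows_def by simp
    qed
    have cB: "card ((A - P) \<union> (P - A)) \<le> 3"
    proof (cases "f j = w")
      case True then have "Dset T l (f j) w = {}" unfolding Dset_def by simp
      then have "(A - P) \<union> (P - A) = {}" using symd[of "f j"] unfolding A_def by argo
      then show ?thesis by (metis card.empty zero_le)
    next
      case False then show ?thesis using bound[OF fj(1) vw(2)] symd[of "f j"]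
        unfolding A_def dist_rows_def by simp
    qed
    have "A - P = {j} \<and> (card A = 3 \<or> card ((A - P) \<union> (P - A)) = 3)"
      by (rule comb_step[OF fA finP cP cA cB jA])
    then show ?thesis using symd[of "f j"]
      unfolding A_def dist_rows_def by argo
  qed
  define Jv where "Jv = {j \<in> J. dist_rows T l (f j) v = 3}"
  define Jw where "Jw = {j \<in> J. dist_rows T l (f j) w = 3}"
  have "J = Jv \<union> Jw" unfolding Jv_def Jw_def using keyj by auto
  then have "card J \<le> card Jv + card Jw" by (metis card_Un_le)
  then have big: "card Jv \<ge> 6 \<or> card Jw \<ge> 6" using cJ by linarith
  have dxx: "dist_rows T l x x = 0" for x unfolding dist_rows_def Dset_def by simp
  have gen: "\<exists>\<sigma>. \<sigma> permutes {0..<n} \<and> card (T3 (\<lambda>i. T (\<sigma> i)) n l) \<ge> 5"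
    if u: "u < n" and Ju: "Ju \<subseteq> J" "\<forall>j\<in>Ju. dist_rows T l (f j) u = 3"
      and cu: "card Ju \<ge> 6"
      and diffP: "\<forall>j\<in>J. Dset T l (f j) u - P = {j}" for u Ju
  proof (rule final_step[OF u, of "f ` Ju"])
    show "\<forall>x\<in>f ` Ju. x < n \<and> x \<noteq> u \<and> dist_rows T l x u = 3"
      using Ju f dxx by fastforce
    have "inj_on (\<lambda>j. Dset T l (f j) u) Ju"
    proof (rule inj_onI)
      fix a b assume "a \<in> Ju" "b \<in> Ju" "Dset T l (f a) u = Dset T l (f b) u"
      then have "{a} = {b}" using diffP Ju(1) by (metis subsetD)
      then show "a = b" by simp
    qed
    then have "card ((\<lambda>j. Dset T l (f j) u) ` Ju) = card Ju" by (rule card_image)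
    moreover have "(\<lambda>x. Dset T l x u) ` f ` Ju = (\<lambda>j. Dset T l (f j) u) ` Ju" by auto
    ultimately show "5 \<le> card ((\<lambda>x. Dset T l x u) ` f ` Ju)" using cu by simp
  qed
  have dv: "\<forall>j\<in>J. Dset T l (f j) v - P = {j}" using keyj by blast
  have dw: "\<forall>j\<in>J. Dset T l (f j) w - P = {j}" using keyj symd by auto
  show ?thesis
  proof (cases "card Jv \<ge> 6")
    case True
    show ?thesis by (rule gen[OF vw(1) _ _ True dv]) (auto simp: Jv_def)
  next
    case False
    then have "card Jw \<ge> 6" using big by simp
    show ?thesis by (rule gen[OF vw(2) _ _ \<open>card Jw \<ge> 6\<close> dw]) (auto simp: Jw_def)
  qed
qed

end
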